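(* Let $\mathbb{H}$ be the real quaternions, $\sigma=\mathrm{Id}$, $\delta=0$. A vector $(a_1,\dots,a_r)\in\mathbb{H}^r$ is a $(\sigma,\delta)$-multiplicity sequence if and only if either $a_1=a_2=\dots=a_r\in\mathbb{R}$, or $a_1,\dots,a_r\in\mathbb{H}\setminus\mathbb{R}$ and for $i=1,\dots,r-1$: $$\mathrm{Re}(a_{i+1})=\mathrm{Re}(a_i),\quad |a_{i+1}|=|a_i|,\quad \overline{a_{i+1}}\ne a_i.$$ In particular $(a,\dots,a)\in\mathbb{H}^r$ is a $(\sigma,\delta)$-multiplicity sequence for every $a\in\mathbb{H}$ and $r\in\mathbb{Z}_+$.
   Context: $\mathbb{H}[x]=\mathbb{H}[x;\mathrm{Id},0]$ is the polynomial ring over the quaternions with $x$ commuting with coefficients. For $q=a+b\mathbf i+c\mathbf j+d\mathbf k$, $\mathrm{Re}(q)=a$, $\overline q=a-b\mathbf i-c\mathbf j-d\mathbf k$, $|q|=\sqrt{q\overline q}$. For $\mathbf a=(a_1,\dots,a_r)$, $P_{\mathbf a}=(x-a_r)\cdots(x-a_1)$; $\mathbf a$ is a $(\sigma,\delta)$-multiplicity sequence if $a_1$ is the only $b\in\mathbb{H}$ such that $x-b$ divides $P_{\mathbf a}$ on the right. *)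

theory Defs
  imports Complex_Main "HOL-Library.Poly_Mapping"
begin

datatype quat = Quat (qRe: real) (qI: real) (qJ: real) (qK: real)

lemma quat_eq_iff: "p = q \<longleftrightarrow> qRe p = qRe q \<and> qI p = qI q \<and> qJ p = qJ q \<and> qK p = qK q"
  by (cases p; cases q) auto

instantiation quat :: ring_1
begin
definition "0 = Quat 0 0 0 0"
definition "1 = Quat 1 0 0 0"
definition "p + q = Quat (qRe p + qRe q) (qI p + qI q) (qJ p + qJ q) (qK p + qK q)"
definition "p - q = Quat (qRe p - qRe q) (qI p - qI q) (qJ p - qJ q) (qK p - qK q)"
definition "- q = Quat (- qRe q) (- qI q) (- qJ q) (- qK q)"
definition "p * q = Quat
   (qRe p * qRe q - qI p * qI q - qJ p * qJ q - qK p * qK q)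
   (qRe p * qI q + qI p * qRe q + qJ p * qK q - qK p * qJ q)
   (qRe p * qJ q - qI p * qK q + qJ p * qRe q + qK p * qI q)
   (qRe p * qK q + qI p * qJ q - qJ p * qI q + qK p * qRe q)"
instance
  by standard (simp_all add: quat_eq_iff zero_quat_def one_quat_def plus_quat_def
      minus_quat_def uminus_quat_def times_quat_def algebra_simps)
end

definition qcnj :: "quat \<Rightarrow> quat" where
  "qcnj q = Quat (qRe q) (- qI q) (- qJ q) (- qK q)"

definition qnorm :: "quat \<Rightarrow> real" where
  "qnorm q = sqrt ((qRe q)\<^sup>2 + (qI q)\<^sup>2 + (qJ q)\<^sup>2 + (qK q)\<^sup>2)"

definition quat_of_real :: "real \<Rightarrow> quat" where
  "quat_of_real r = Quat r 0 0 0"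

definition quat_reals :: "quat set" where
  "quat_reals = range quat_of_real"

section \<open>The polynomial ring H[x] (x central): finitely supported maps nat \<Rightarrow> quat\<close>

type_synonym qpoly = "nat \<Rightarrow>\<^sub>0 quat"

definition qX :: qpoly where "qX = Poly_Mapping.single 1 1"

definition qC :: "quat \<Rightarrow> qpoly" where "qC c = Poly_Mapping.single 0 c"

definition right_dvd :: "qpoly \<Rightarrow> qpoly \<Rightarrow> bool" where
  "right_dvd d P \<longleftrightarrow> (\<exists>Q. P = Q * d)"

text \<open>For a = [a_1,...,a_r], P_a = (x - a_r) * ... * (x - a_1).\<close>
definition P_seq :: "quat list \<Rightarrow> qpoly" where
  "P_seq as = foldl (\<lambda>P a. (qX - qC a) * P) 1 as"

definition multiplicity_seq :: "quat list \<Rightarrow> bool" where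
  "multiplicity_seq as \<longleftrightarrow> as \<noteq> [] \<and> (\<forall>b. right_dvd (qX - qC b) (P_seq as) \<longleftrightarrow> b = hd as)"

end

theory Submission imports Defs begin

definition nsq :: "quat \<Rightarrow> real" where
  "nsq q = (qRe q)\<^sup>2 + (qI q)\<^sup>2 + (qJ q)\<^sup>2 + (qK q)\<^sup>2"

lemmas qdefs = quat_eq_iff zero_quat_def one_quat_def plus_quat_def
      minus_quat_def uminus_quat_def times_quat_def qcnj_def quat_of_real_def nsq_def

lemma nsq_mult: "nsq (p * q) = nsq p * nsq q"
  by (simp add: nsq_def times_quat_def power2_eq_square algebra_simps)

lemma nsq_eq_0: "nsq q = 0 \<longleftrightarrow> q = 0"
  by (simp add: nsq_def qdefs add_nonneg_eq_0_iff)

lemma nsq_nonneg: "nsq q \<ge> 0" by (simp add: nsq_def)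

instance quat :: ring_1_no_zero_divisors
proof
  fix a b :: quat assume "a \<noteq> 0" "b \<noteq> 0"
  then have "nsq a \<noteq> 0" "nsq b \<noteq> 0" by (simp_all add: nsq_eq_0)
  then have "nsq (a*b) \<noteq> 0" by (simp add: nsq_mult)
  then show "a * b \<noteq> 0" by (simp add: nsq_eq_0)
qed

lemma reals_iff: "q \<in> quat_reals \<longleftrightarrow> qI q = 0 \<and> qJ q = 0 \<and> qK q = 0"
  by (cases q) (auto simp: quat_reals_def quat_of_real_def)

lemma real_commute: "q \<in> quat_reals \<Longrightarrow> q * x = x * q"
  by (simp add: reals_iff qdefs)

lemma qor_commute: "quat_of_real r * x = x * quat_of_real r"
  by (simp add: qdefs)

lemma cnj_mult_self: "qcnj a * a = quat_of_real (nsq a)"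
  by (simp add: qdefs power2_eq_square algebra_simps)
lemma mult_cnj_self: "a * qcnj a = quat_of_real (nsq a)"
  by (simp add: qdefs power2_eq_square algebra_simps)

definition qinv :: "quat \<Rightarrow> quat" where
  "qinv q = quat_of_real (1 / nsq q) * qcnj q"

lemma qor_mult: "quat_of_real a * quat_of_real b = quat_of_real (a * b)"
  by (simp add: qdefs)
lemma qor_one: "quat_of_real 1 = 1" by (simp add: qdefs)

lemma qinv_right: "h \<noteq> 0 \<Longrightarrow> h * qinv h = 1"
proof -
  assume "h \<noteq> 0" then have n: "nsq h \<noteq> 0" by (simp add: nsq_eq_0)
  have "h * qinv h = quat_of_real (1 / nsq h) * (h * qcnj h)"
    unfolding qinv_def by (metis mult.assoc qor_commute)
  also have "\<dots> = 1" using n by (simp add: mult_cnj_self qor_mult qor_one)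
  finally show ?thesis .
qed

lemma qinv_left: "h \<noteq> 0 \<Longrightarrow> qinv h * h = 1"
proof -
  assume "h \<noteq> 0" then have n: "nsq h \<noteq> 0" by (simp add: nsq_eq_0)
  have "qinv h * h = quat_of_real (1 / nsq h) * (qcnj h * h)"
    unfolding qinv_def by (simp add: mult.assoc)
  also have "\<dots> = 1" using n by (simp add: cnj_mult_self qor_mult qor_one)
  finally show ?thesis .
qed

definition sim :: "quat \<Rightarrow> quat \<Rightarrow> bool" where
  "sim a b \<longleftrightarrow> qRe a = qRe b \<and> nsq a = nsq b"

lemma qRe_comm: "qRe (x * y) = qRe (y * x)"
  by (simp add: times_quat_def)

lemma conj_sim: assumes "h \<noteq> 0" shows "sim (h * c * qinv h) c"
proof -
  have "qRe (h * c * qinv h) = qRe (qinv h * (h * c))" by (simp add: qRe_comm)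
  also have "\<dots> = qRe c" using qinv_left[OF assms] by (simp add: mult.assoc[symmetric])
  finally have 1: "qRe (h * c * qinv h) = qRe c" .
  have "nsq h * nsq (qinv h) = 1" using qinv_right[OF assms] nsq_mult[of h "qinv h"]
    by (simp add: nsq_def one_quat_def)
  then have 2: "nsq (h * c * qinv h) = nsq c" by (simp add: nsq_mult algebra_simps)
  show ?thesis using 1 2 by (simp add: sim_def)
qed

lemma sq_id: "c * c = quat_of_real (2 * qRe c) * c - quat_of_real (nsq c)"
  by (simp add: qdefs power2_eq_square algebra_simps)

lemma cnj_id: "qcnj a = quat_of_real (2 * qRe a) - a"
  by (simp add: qdefs)

lemma sim_step: assumes "sim c a" shows "(c - a) * c = qcnj a * (c - a)"
proof -
  have cc: "c * c = quat_of_real (2 * qRe a) * c - quat_of_real (nsq a)"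
    using sq_id[of c] assms by (simp add: sim_def)
  have aa: "a * a = quat_of_real (2 * qRe a) * a - quat_of_real (nsq a)"
    using sq_id[of a] .
  have "(c - a) * c = c * c - a * c" by (simp add: algebra_simps)
  also have "\<dots> = quat_of_real (2 * qRe a) * c - quat_of_real (nsq a) - a * c" by (simp only: cc)
  also have "\<dots> = (quat_of_real (2 * qRe a) - a) * c - quat_of_real (nsq a)" by (simp add: algebra_simps)
  also have "\<dots> = (quat_of_real (2 * qRe a) - a) * c - (quat_of_real (2 * qRe a) * a - a * a)" by (simp add: aa)
  also have "\<dots> = qcnj a * (c - a)" by (simp add: cnj_id algebra_simps)
  finally show ?thesis .
qed

lemma swap_id: "((t + a) * (t - qcnj a) - (t - qcnj a) * t) * t = t * a * (t - qcnj a)"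
  by (simp add: qdefs algebra_simps)

lemma swap_exists: assumes "\<not> sim t a" shows "\<exists>t'. sim t' t \<and> (t + a - t') * t' = t * a"
proof -
  define h where "h = t - qcnj a"
  have h0: "h \<noteq> 0"
  proof
    assume "h = 0" then have "t = qcnj a" by (simp add: h_def)
    then have "sim t a" by (simp add: sim_def qdefs)
    then show False using assms by simp
  qed
  define t' where "t' = h * t * qinv h"
  have th: "t' * h = h * t" using qinv_left[OF h0] by (simp add: t'_def mult.assoc)
  have "((t + a - t') * t' - t * a) * h = (t + a - t') * (t' * h) - t * a * h"
    by (simp add: algebra_simps)
  also have "\<dots> = (t + a - t') * (h * t) - t * a * h" by (simp only: th)
  also have "\<dots> = (t + a) * h * t - t' * h * t - t * a * h" by (simp add: algebra_simps)
  also have "\<dots> = (t + a) * h * t - h * t * t - t * a * h" by (simp only: th)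
  also have "\<dots> = 0" using swap_id[of t a] by (simp add: h_def algebra_simps)
  finally have "(t + a - t') * t' - t * a = 0" using h0 by simp
  then show ?thesis using conj_sim[OF h0, of t] by (auto simp: t'_def)
qed

lemma SA1: "(\<Sum>a. (f a when a = b \<and> P a)) = ((f b :: 'a::comm_monoid_add) when P b)"
proof -
  have "(\<lambda>a. (f a when a = b \<and> P a)) = (\<lambda>a. (f a when P b) when a = b)"
    by (auto simp: when_def fun_eq_iff)
  then show ?thesis by (simp only: Sum_any_when_equal)
qed
lemma SA2: "(\<Sum>a. (f a when b = a \<and> P a)) = ((f b :: 'a::comm_monoid_add) when P b)"
proof -
  have "(\<lambda>a. (f a when b = a \<and> P a)) = (\<lambda>a. (f a when P b) when a = b)"
    by (auto simp: when_def fun_eq_iff)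
  then show ?thesis by (simp only: Sum_any_when_equal)
qed
lemma SA3: "0 < k \<Longrightarrow> (\<Sum>a. (f a when k = Suc a)) = (f (k - 1) :: 'a::comm_monoid_add)"
proof -
  assume "0 < k"
  then have "(\<lambda>a. (f a when k = Suc a)) = (\<lambda>a. f a when a = k - 1)"
    by (auto simp: when_def fun_eq_iff)
  then show ?thesis by (simp only: Sum_any_when_equal)
qed
lemma SA4: "(\<Sum>a::nat. (c when a = 0 \<and> k = b + a)) = ((c :: 'a::comm_monoid_add) when k = b)"
  using SA1[where f="\<lambda>_. c" and b=0 and P="\<lambda>a. k = b + a"] by simp
lemma SA5: "(\<Sum>a::nat. (c when Suc 0 = a \<and> k = b + a)) = ((c :: 'a::comm_monoid_add) when k = Suc b)"
  using SA2[where f="\<lambda>_. c" and b="Suc 0" and P="\<lambda>a. k = b + a"] by simp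

lemma lookup_mult_C_right: "Poly_Mapping.lookup (p * qC c) k = Poly_Mapping.lookup p k * c"
  unfolding qC_def lookup_mult lookup_single
  by (simp add: when_when mult_when when_mult SA4)

lemma lookup_mult_C_left: "Poly_Mapping.lookup (qC c * p) k = c * Poly_Mapping.lookup p k"
  unfolding qC_def lookup_mult lookup_single
  by (simp add: when_when mult_when when_mult Sum_any_right_distrib)

lemma lookup_mult_X_left: "Poly_Mapping.lookup (qX * p) k = (if k = 0 then 0 else Poly_Mapping.lookup p (k - 1))"
  unfolding qX_def lookup_mult lookup_single
  by (simp add: when_when mult_when when_mult SA3)
lemma lookup_mult_X_right: "Poly_Mapping.lookup (p * qX) k = (if k = 0 then 0 else Poly_Mapping.lookup p (k - 1))"
  unfolding qX_def lookup_mult lookup_single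
  by (simp add: when_when mult_when when_mult SA5 SA3)


abbreviation lk :: "qpoly \<Rightarrow> nat \<Rightarrow> quat" where "lk \<equiv> Poly_Mapping.lookup"

lemma X_central: "qX * p = p * qX"
  by (rule poly_mapping_eqI) (simp add: lookup_mult_X_left lookup_mult_X_right)

lemma C_real_central: "qC (quat_of_real r) * p = p * qC (quat_of_real r)"
  by (rule poly_mapping_eqI) (simp add: lookup_mult_C_left lookup_mult_C_right qor_commute)

lemma qC_mult: "qC a * qC b = qC (a * b)" by (simp add: qC_def mult_single)
lemma qC_add: "qC a + qC b = qC (a + b)" by (simp add: qC_def single_add)
lemma qC_X: "qX * qC a = qC a * qX"
  by (rule X_central)

lemma quad_expand: "(qX - qC c) * (qX - qC d) = qX * qX - qC (c + d) * qX + qC (c * d)"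
proof -
  have "(qX - qC c) * (qX - qC d) = qX * qX - qX * qC d - qC c * qX + qC c * qC d"
    by (simp add: algebra_simps)
  also have "\<dots> = qX * qX - (qC c + qC d) * qX + qC (c * d)"
    by (simp only: qC_X qC_mult) (simp add: algebra_simps)
  finally show ?thesis by (simp add: qC_add)
qed

lemma quad_eq: "c + d = c' + d' \<Longrightarrow> c * d = c' * d' \<Longrightarrow>
   (qX - qC c) * (qX - qC d) = (qX - qC c') * (qX - qC d')"
  by (simp add: quad_expand)

definition fstep :: "qpoly \<Rightarrow> quat \<Rightarrow> qpoly" where "fstep P a = (qX - qC a) * P"

lemma P_seq_fstep: "P_seq as = foldl fstep 1 as"
  unfolding P_seq_def fstep_def by (rule arg_cong[where f="\<lambda>f. foldl f 1 as"]) (simp add: fun_eq_iff)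

lemma foldl_fstep: "foldl fstep P L = foldl fstep 1 L * P"
proof (induction L arbitrary: P)
  case Nil then show ?case by simp
next
  case (Cons x L)
  have "foldl fstep P (x # L) = foldl fstep (fstep P x) L" by simp
  also have "\<dots> = foldl fstep 1 L * fstep P x" by (rule Cons.IH)
  finally have 1: "foldl fstep P (x # L) = foldl fstep 1 L * ((qX - qC x) * P)"
    by (simp add: fstep_def)
  have "foldl fstep 1 (x # L) = foldl fstep (fstep 1 x) L" by simp
  also have "\<dots> = foldl fstep 1 L * fstep 1 x" by (rule Cons.IH)
  finally have "foldl fstep 1 (x # L) = foldl fstep 1 L * ((qX - qC x) * 1)"
    by (simp add: fstep_def)
  with 1 show ?case by (simp add: mult.assoc)
qed

lemma P_seq_snoc: "P_seq (L @ [a]) = (qX - qC a) * P_seq L"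
  by (simp add: P_seq_fstep fstep_def)

lemma P_seq_Nil: "P_seq [] = 1" by (simp add: P_seq_def)

lemma P_seq_append: "P_seq (L1 @ L2) = foldl fstep 1 L2 * P_seq L1"
  unfolding P_seq_fstep foldl_append by (rule foldl_fstep)

lemma P_seq_Cons: "P_seq (a # L) = foldl fstep 1 L * (qX - qC a)"
  using P_seq_append[of "[a]" L] by (simp add: P_seq_fstep fstep_def)

lemma right_dvd_prefix: "right_dvd d (P_seq L1) \<Longrightarrow> right_dvd d (P_seq (L1 @ L2))"
  unfolding right_dvd_def P_seq_append by (metis mult.assoc)

lemma root_hd: "right_dvd (qX - qC a) (P_seq (a # L))"
  unfolding right_dvd_def P_seq_Cons by blast

lemma swap_all:
  "t \<in> R \<Longrightarrow> (\<forall>x\<in>set L. \<forall>t\<in>R. \<exists>t'\<in>R. (t + x - t') * t' = t * x) \<Longrightarrow>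
    \<exists>b\<in>R. right_dvd (qX - qC b) ((qX - qC t) * P_seq L)"
proof (induction L arbitrary: t rule: rev_induct)
  case Nil
  then show ?case by (auto simp: right_dvd_def P_seq_Nil intro!: bexI[of _ t] exI[of _ 1])
next
  case (snoc x L)
  then obtain t' where t': "t' \<in> R" "(t + x - t') * t' = t * x" by auto
  have e: "(qX - qC t) * (qX - qC x) = (qX - qC (t + x - t')) * (qX - qC t')"
    by (rule quad_eq) (use t' in auto)
  from snoc.IH[OF t'(1)] snoc.prems obtain b Q where b: "b \<in> R"
    "(qX - qC t') * P_seq L = Q * (qX - qC b)" by (auto simp: right_dvd_def)
  have "(qX - qC t) * P_seq (L @ [x]) = (qX - qC t) * (qX - qC x) * P_seq L"
    by (simp add: P_seq_snoc mult.assoc)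
  also have "\<dots> = ((qX - qC (t + x - t')) * Q) * (qX - qC b)"
    by (simp only: e mult.assoc b(2))
  finally show ?case using b(1) unfolding right_dvd_def by blast
qed


definition ev :: "qpoly \<Rightarrow> quat \<Rightarrow> quat" where
  "ev P b = (\<Sum>i\<in>Poly_Mapping.keys P. lk P i * b ^ i)"

lemma ev_superset: "finite A \<Longrightarrow> Poly_Mapping.keys P \<subseteq> A \<Longrightarrow> ev P b = (\<Sum>i\<in>A. lk P i * b ^ i)"
  unfolding ev_def by (rule sum.mono_neutral_left) (auto simp: in_keys_iff)

lemma ev_X: "ev (qX * P) b = ev P b * b"
proof -
  let ?K = "Poly_Mapping.keys P"
  have sub: "Poly_Mapping.keys (qX * P) \<subseteq> insert 0 (Suc ` ?K)"
  proof
    fix i assume "i \<in> Poly_Mapping.keys (qX * P)"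
    then have "lk (qX * P) i \<noteq> 0" by (simp add: in_keys_iff)
    then have "i \<noteq> 0" "lk P (i - 1) \<noteq> 0" by (auto simp: lookup_mult_X_left split: if_splits)
    then show "i \<in> insert 0 (Suc ` ?K)"
      by (auto simp: in_keys_iff image_iff intro!: bexI[of _ "i - 1"])
  qed
  have "ev (qX * P) b = (\<Sum>i\<in>insert 0 (Suc ` ?K). lk (qX * P) i * b ^ i)"
    by (rule ev_superset[OF _ sub]) simp
  also have "\<dots> = (\<Sum>i\<in>Suc ` ?K. lk (qX * P) i * b ^ i)"
    by (subst sum.insert) (auto simp: lookup_mult_X_left)
  also have "\<dots> = (\<Sum>j\<in>?K. lk P j * b ^ j * b)"
    by (subst sum.reindex) (auto simp: lookup_mult_X_left mult.assoc power_commutes)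
  also have "\<dots> = ev P b * b" by (simp add: ev_def sum_distrib_right)
  finally show ?thesis .
qed

lemma ev_CL: "ev (qC c * P) b = c * ev P b"
proof -
  have sub: "Poly_Mapping.keys (qC c * P) \<subseteq> Poly_Mapping.keys P"
    by (auto simp: in_keys_iff lookup_mult_C_left)
  have "ev (qC c * P) b = (\<Sum>i\<in>Poly_Mapping.keys P. lk (qC c * P) i * b ^ i)"
    by (rule ev_superset[OF _ sub]) simp
  also have "\<dots> = c * ev P b" by (simp add: ev_def sum_distrib_left lookup_mult_C_left mult.assoc)
  finally show ?thesis .
qed

lemma ev_CR: "ev (P * qC b) b = ev P b * b"
proof -
  have sub: "Poly_Mapping.keys (P * qC b) \<subseteq> Poly_Mapping.keys P"
    by (auto simp: in_keys_iff lookup_mult_C_right)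
  have "ev (P * qC b) b = (\<Sum>i\<in>Poly_Mapping.keys P. lk (P * qC b) i * b ^ i)"
    by (rule ev_superset[OF _ sub]) simp
  also have "\<dots> = ev P b * b"
    by (simp add: ev_def sum_distrib_right lookup_mult_C_right mult.assoc power_commutes)
  finally show ?thesis .
qed

lemma ev_diff: "ev (P - Q) b = ev P b - ev Q b"
proof -
  let ?A = "Poly_Mapping.keys P \<union> Poly_Mapping.keys Q"
  have sub: "Poly_Mapping.keys (P - Q) \<subseteq> ?A"
    by (auto simp: in_keys_iff lookup_minus)
  have "ev (P - Q) b = (\<Sum>i\<in>?A. lk (P - Q) i * b ^ i)"
    by (rule ev_superset[OF _ sub]) simp
  also have "\<dots> = (\<Sum>i\<in>?A. lk P i * b ^ i) - (\<Sum>i\<in>?A. lk Q i * b ^ i)"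
    by (simp add: lookup_minus left_diff_distrib sum_subtractf)
  also have "\<dots> = ev P b - ev Q b"
    by (simp add: ev_superset[symmetric])
  finally show ?thesis .
qed

lemma ev_one: "ev 1 b = 1"
  by (simp add: ev_def)

lemma ev_root: "right_dvd (qX - qC b) P \<Longrightarrow> ev P b = 0"
proof -
  assume "right_dvd (qX - qC b) P"
  then obtain Q where "P = Q * (qX - qC b)" by (auto simp: right_dvd_def)
  then have "P = qX * Q - Q * qC b" by (simp add: right_diff_distrib X_central)
  then show ?thesis by (simp add: ev_diff ev_X ev_CR)
qed

lemma ev_step: "ev ((qX - qC a) * P) b = ev P b * b - a * ev P b"
  by (simp add: left_diff_distrib ev_diff ev_X ev_CL)

lemma ev_snoc: "ev (P_seq (L @ [a])) b = ev (P_seq L) b * b - a * ev (P_seq L) b"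
  by (simp add: P_seq_snoc ev_step)


lemma sim_refl: "sim a a" by (simp add: sim_def)
lemma sim_sym: "sim a b \<Longrightarrow> sim b a" by (simp add: sim_def)
lemma sim_trans: "sim a b \<Longrightarrow> sim b c \<Longrightarrow> sim a c" by (simp add: sim_def)
lemma sim_cnj: "sim (qcnj a) a" by (simp add: sim_def qdefs)
lemma cnj_cnj: "qcnj (qcnj a) = a" by (simp add: qdefs)
lemma qnorm_eq: "qnorm a = qnorm b \<longleftrightarrow> nsq a = nsq b"
  by (simp add: qnorm_def nsq_def)
lemma nonreal_iff: "a \<notin> quat_reals \<longleftrightarrow> nsq a > (qRe a)\<^sup>2"
proof -
  have "nsq a - (qRe a)\<^sup>2 = (qI a)\<^sup>2 + (qJ a)\<^sup>2 + (qK a)\<^sup>2" by (simp add: nsq_def)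
  moreover have "(qI a)\<^sup>2 + (qJ a)\<^sup>2 + (qK a)\<^sup>2 = 0 \<longleftrightarrow> qI a = 0 \<and> qJ a = 0 \<and> qK a = 0"
    by (simp add: add_nonneg_eq_0_iff)
  moreover have "(qI a)\<^sup>2 + (qJ a)\<^sup>2 + (qK a)\<^sup>2 \<ge> 0" by simp
  ultimately have "a \<notin> quat_reals \<longleftrightarrow> nsq a - (qRe a)\<^sup>2 \<noteq> 0" by (simp add: reals_iff)
  also have "\<dots> \<longleftrightarrow> nsq a > (qRe a)\<^sup>2"
    using \<open>(qI a)\<^sup>2 + (qJ a)\<^sup>2 + (qK a)\<^sup>2 \<ge> 0\<close> \<open>nsq a - (qRe a)\<^sup>2 = _\<close> by linarith
  finally show ?thesis .
qed
lemma sim_nonreal: "sim a b \<Longrightarrow> b \<notin> quat_reals \<Longrightarrow> a \<notin> quat_reals"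
  by (simp add: nonreal_iff sim_def)
lemma cnj_neq: "a \<notin> quat_reals \<Longrightarrow> qcnj a \<noteq> a"
  by (auto simp: reals_iff qdefs)

definition RC :: "quat list \<Rightarrow> bool" where
  "RC as \<longleftrightarrow> (\<forall>i < length as. as ! i = as ! 0) \<and> as ! 0 \<in> quat_reals"

definition CH :: "quat list \<Rightarrow> bool" where
  "CH as \<longleftrightarrow> (\<forall>i < length as. as ! i \<notin> quat_reals) \<and>
               (\<forall>i. i + 1 < length as \<longrightarrow>
                    qRe (as ! (i + 1)) = qRe (as ! i) \<and>
                    qnorm (as ! (i + 1)) = qnorm (as ! i) \<and>
                    qcnj (as ! (i + 1)) \<noteq> as ! i)"

lemma CH_sim: "CH L \<Longrightarrow> i < length L \<Longrightarrow> sim (L ! i) (L ! 0)"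
proof (induction i)
  case 0 then show ?case by (simp add: sim_refl)
next
  case (Suc i)
  then have "sim (L ! Suc i) (L ! i)" by (simp add: CH_def sim_def qnorm_eq)
  with Suc show ?case by (auto intro: sim_trans)
qed

lemma CH_set_sim: "CH L \<Longrightarrow> x \<in> set L \<Longrightarrow> sim x (L ! 0)"
  by (auto simp: in_set_conv_nth intro: CH_sim)

lemma RC_set: "RC L \<Longrightarrow> x \<in> set L \<Longrightarrow> x = L ! 0"
  by (auto simp: in_set_conv_nth RC_def)

lemma ev_RC: "r \<in> quat_reals \<Longrightarrow> (\<forall>x\<in>set L. x = r) \<Longrightarrow> ev (P_seq L) b = (b - r) ^ length L"
proof (induction L rule: rev_induct)
  case Nil then show ?case by (simp add: P_seq_Nil ev_one)
next
  case (snoc x L)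
  then have x: "x = r" and IH: "ev (P_seq L) b = (b - r) ^ length L" by auto
  have "ev (P_seq (L @ [x])) b = (b - r) ^ length L * b - r * (b - r) ^ length L"
    by (simp add: ev_snoc IH x)
  also have "\<dots> = (b - r) ^ length L * (b - r)"
    using real_commute[OF snoc.prems(1), of "(b - r) ^ length L"] by (simp add: algebra_simps)
  also have "\<dots> = (b - r) ^ Suc (length L)" by (simp only: power_Suc2)
  finally show ?case by simp
qed

lemma step_gen:
  fixes g b c a h c' :: quat
  assumes "g * b = c * g" "h = c - a" "h * c = c' * h"
  shows "(g * b - a * g) * b = c' * (g * b - a * g)"
proof -
  have "g * b - a * g = (c - a) * g" by (simp add: assms(1) left_diff_distrib)
  then have e: "g * b - a * g = h * g" using assms(2) by simp
  have "h * g * b = h * c * g" using assms(1) by (simp add: mult.assoc)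
  also have "\<dots> = c' * (h * g)" using assms(3) by (simp add: mult.assoc)
  finally show ?thesis by (simp add: e)
qed

lemma chain_inv:
  assumes "\<forall>x\<in>set L. sim x s" "\<forall>i. Suc i < length L \<longrightarrow> qcnj (L ! Suc i) \<noteq> L ! i"
    "L \<noteq> [] \<longrightarrow> b \<noteq> hd L"
  shows "\<exists>c. ev (P_seq L) b \<noteq> 0 \<and> ev (P_seq L) b * b = c * ev (P_seq L) b \<and>
     (sim b s \<longrightarrow> c = (if L = [] then b else qcnj (last L))) \<and> (\<not> sim b s \<longrightarrow> \<not> sim c s)"
  using assms
proof (induction L rule: rev_induct)
  case Nil then show ?case by (auto simp: P_seq_Nil ev_one)
next
  case (snoc a L)
  have h1: "\<forall>x\<in>set L. sim x s" using snoc.prems(1) by auto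
  have h2: "\<forall>i. Suc i < length L \<longrightarrow> qcnj (L ! Suc i) \<noteq> L ! i"
  proof (intro allI impI)
    fix i assume "Suc i < length L"
    then show "qcnj (L ! Suc i) \<noteq> L ! i"
      using snoc.prems(2)[rule_format, of i] by (simp add: nth_append)
  qed
  have h3: "L \<noteq> [] \<longrightarrow> b \<noteq> hd L" using snoc.prems(3) by auto
  obtain c where c: "ev (P_seq L) b \<noteq> 0" "ev (P_seq L) b * b = c * ev (P_seq L) b"
    "sim b s \<longrightarrow> c = (if L = [] then b else qcnj (last L))" "\<not> sim b s \<longrightarrow> \<not> sim c s"
    using snoc.IH[OF h1 h2 h3] by blast
  have as: "sim a s" using snoc.prems(1) by auto
  have ca: "c \<noteq> a"
  proof
    assume "c = a"
    show False
    proof (cases "sim b s")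
      case False then show False using c(4) \<open>c = a\<close> as by simp
    next
      case True
      show False
      proof (cases "L = []")
        case True then show False using \<open>sim b s\<close> c(3) \<open>c = a\<close> snoc.prems(3) by simp
      next
        case False
        then have "qcnj a \<noteq> last L"
          using snoc.prems(2)[rule_format, of "length L - 1"]
          by (simp add: nth_append last_conv_nth)
        then show False using \<open>sim b s\<close> c(3) \<open>c = a\<close> False by (simp add: cnj_cnj)
      qed
    qed
  qed
  let ?g = "ev (P_seq L) b"
  have g': "ev (P_seq (L @ [a])) b = (c - a) * ?g"
    using c(2) by (simp add: ev_snoc algebra_simps)
  have nz: "ev (P_seq (L @ [a])) b \<noteq> 0" using g' ca c(1) by simp
  show ?case
  proof (cases "sim b s")
    case True
    have "sim c a"
    proof (cases "L = []")
      case True then show ?thesis using c(3) \<open>sim b s\<close> as by (auto intro: sim_trans sim_sym)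
    next
      case False
      then have "last L \<in> set L" by simp
      then have "sim (last L) s" using h1 by auto
      then have "sim (qcnj (last L)) a" using as sim_cnj sim_trans sim_sym by metis
      then show ?thesis using c(3) \<open>sim b s\<close> False by simp
    qed
    then have "(c - a) * c = qcnj a * (c - a)" by (rule sim_step)
    then have "ev (P_seq (L @ [a])) b * b = qcnj a * ev (P_seq (L @ [a])) b"
      using step_gen[OF c(2) refl] by (simp add: ev_snoc)
    then show ?thesis using nz True by auto
  next
    case False
    define h where "h = c - a"
    have h0: "h \<noteq> 0" using ca by (simp add: h_def)
    define c' where "c' = h * c * qinv h"
    have hc: "h * c = c' * h" using qinv_left[OF h0] by (simp add: c'_def mult.assoc)
    have "sim c' c" unfolding c'_def by (rule conj_sim[OF h0])
    then have "\<not> sim c' s" using c(4) False sim_trans sim_sym by metis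
    moreover have "ev (P_seq (L @ [a])) b * b = c' * ev (P_seq (L @ [a])) b"
      using step_gen[OF c(2) h_def hc] by (simp add: ev_snoc)
    ultimately show ?thesis using nz False by auto
  qed
qed

lemma if_dir:
  assumes "as \<noteq> []" "RC as \<or> CH as"
  shows "multiplicity_seq as"
  unfolding multiplicity_seq_def
proof (intro conjI allI iffI)
  show "as \<noteq> []" by fact
next
  fix b assume "b = hd as"
  then show "right_dvd (qX - qC b) (P_seq as)"
    using assms(1) by (cases as) (simp_all add: root_hd)
next
  fix b assume rd: "right_dvd (qX - qC b) (P_seq as)"
  show "b = hd as"
  proof (rule ccontr)
    assume nb: "b \<noteq> hd as"
    have ev0: "ev (P_seq as) b = 0" using ev_root[OF rd] .
    have h0: "hd as = as ! 0" using assms(1) by (simp add: hd_conv_nth)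
    from assms(2) show False
    proof
      assume rc: "RC as"
      have allr: "\<forall>x\<in>set as. x = as ! 0" using RC_set[OF rc] by blast
      have r0: "as ! 0 \<in> quat_reals" using rc by (simp add: RC_def)
      have "ev (P_seq as) b = (b - as ! 0) ^ length as"
        by (rule ev_RC[OF r0 allr])
      moreover have "b - as ! 0 \<noteq> 0" using nb h0 by simp
      ultimately show False using ev0 by simp
    next
      assume ch: "CH as"
      have "\<forall>i. Suc i < length as \<longrightarrow> qcnj (as ! Suc i) \<noteq> as ! i"
        using ch by (simp add: CH_def)
      moreover have "\<forall>x\<in>set as. sim x (as ! 0)" using CH_set_sim[OF ch] by blast
      moreover have "as \<noteq> [] \<longrightarrow> b \<noteq> hd as" using nb by blast
      ultimately obtain c where "ev (P_seq as) b \<noteq> 0"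
        using chain_inv[of as "as ! 0" b] by blast
      then show False using ev0 by simp
    qed
  qed
qed


lemma central_mult:
  assumes a: "\<forall>p. A * p = p * A" and b: "\<forall>p. B * p = p * B"
  shows "\<forall>p::qpoly. (A * B) * p = p * (A * B)"
proof
  fix p :: qpoly
  have "(A * B) * p = A * (B * p)" by (rule mult.assoc)
  also have "\<dots> = A * (p * B)" by (simp only: b[rule_format, of p])
  also have "\<dots> = (A * p) * B" by (rule mult.assoc[symmetric])
  also have "\<dots> = (p * A) * B" by (simp only: a[rule_format, of p])
  also have "\<dots> = p * (A * B)" by (rule mult.assoc)
  finally show "(A * B) * p = p * (A * B)" .
qed

lemma N_central:
  "(qX * qX - qC (quat_of_real u) * qX + qC (quat_of_real v)) * p = p * (qX * qX - qC (quat_of_real u) * qX + qC (quat_of_real v))"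
proof -
  have X: "\<forall>p. qX * p = p * qX" using X_central by blast
  have XX: "\<forall>p. (qX * qX) * p = p * (qX * qX)" by (rule central_mult[OF X X])
  have CX: "\<forall>p. (qC (quat_of_real u) * qX) * p = p * (qC (quat_of_real u) * qX)"
    by (rule central_mult[OF _ X]) (simp add: C_real_central)
  have "(qX * qX - qC (quat_of_real u) * qX + qC (quat_of_real v)) * p =
     (qX * qX) * p - (qC (quat_of_real u) * qX) * p + qC (quat_of_real v) * p"
    by (simp only: ring_distribs)
  also have "\<dots> = p * (qX * qX) - p * (qC (quat_of_real u) * qX) + p * qC (quat_of_real v)"
    by (simp only: XX[rule_format, of p] CX[rule_format, of p] C_real_central[of v p])
  also have "\<dots> = p * (qX * qX - qC (quat_of_real u) * qX + qC (quat_of_real v))"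
    by (simp only: ring_distribs)
  finally show ?thesis .
qed

lemma mult_seq_prefix:
  assumes "multiplicity_seq (L @ [a])" "L \<noteq> []"
  shows "multiplicity_seq L"
  unfolding multiplicity_seq_def
proof (intro conjI allI iffI)
  show "L \<noteq> []" by fact
next
  fix b assume "b = hd L"
  then show "right_dvd (qX - qC b) (P_seq L)" using root_hd assms(2) by (cases L) auto
next
  fix b assume "right_dvd (qX - qC b) (P_seq L)"
  then have "right_dvd (qX - qC b) (P_seq (L @ [a]))" by (rule right_dvd_prefix)
  then show "b = hd L" using assms by (simp add: multiplicity_seq_def)
qed

lemma only_if_dir: "multiplicity_seq as \<Longrightarrow> RC as \<or> CH as"
proof (induction as rule: rev_induct)
  case Nil then show ?case by (simp add: multiplicity_seq_def)
next
  case (snoc a L)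
  show ?case
  proof (cases "L = []")
    case True
    then show ?thesis by (cases "a \<in> quat_reals") (auto simp: RC_def CH_def)
  next
    case Lne: False
    have IH: "RC L \<or> CH L" using snoc.IH mult_seq_prefix[OF snoc.prems Lne] by blast
    define s where "s = L ! 0"
    have hds: "hd (L @ [a]) = s" using Lne by (cases L) (simp_all add: s_def)
    have roots: "\<And>b. right_dvd (qX - qC b) (P_seq (L @ [a])) \<Longrightarrow> b = s"
      using snoc.prems hds by (simp add: multiplicity_seq_def)
    have PL: "P_seq (L @ [a]) = (qX - qC a) * P_seq L" by (rule P_seq_snoc)
    from IH show ?thesis
    proof
      assume rc: "RC L"
      show ?thesis
      proof (cases "a = s")
        case True
        have allL: "\<forall>i<length L. L ! i = s" using rc by (simp add: RC_def s_def)
        have z: "(L @ [a]) ! 0 = s" using Lne by (simp add: nth_append s_def)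
        have "RC (L @ [a])"
          unfolding RC_def
        proof (intro conjI allI impI)
          fix i assume i: "i < length (L @ [a])"
          show "(L @ [a]) ! i = (L @ [a]) ! 0"
          proof (cases "i < length L")
            case True then show ?thesis using allL z by (simp add: nth_append)
          next
            case False then have "i = length L" using i by simp
            then show ?thesis using z \<open>a = s\<close> by simp
          qed
        next
          show "(L @ [a]) ! 0 \<in> quat_reals" using z rc by (simp add: RC_def s_def)
        qed
        then show ?thesis by simp
      next
        case False
        have sr: "s \<in> quat_reals" using rc by (simp add: RC_def s_def)
        have "\<exists>b\<in>{a}. right_dvd (qX - qC b) ((qX - qC a) * P_seq L)"
        proof (rule swap_all)
          show "\<forall>x\<in>set L. \<forall>t\<in>{a}. \<exists>t'\<in>{a}. (t + x - t') * t' = t * x"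
          proof (intro ballI)
            fix x t assume x: "x \<in> set L" and t: "t \<in> {a}"
            have xs: "x = s" using RC_set[OF rc x] by (simp add: s_def)
            have sa: "s * a = a * s" by (rule real_commute[OF sr])
            have "(a + x - a) * a = a * x" using sa xs by simp
            then show "\<exists>t'\<in>{a}. (t + x - t') * t' = t * x" using t by blast
          qed
        qed simp
        then have "a = s" using roots PL by auto
        then show ?thesis using False by simp
      qed
    next
      assume ch: "CH L"
      have simL: "\<forall>x\<in>set L. sim x s" using CH_set_sim[OF ch] by (simp add: s_def)
      have snr: "s \<notin> quat_reals" using ch Lne by (simp add: CH_def s_def)
      show ?thesis
      proof (cases "sim a s")
        case False
        have "\<exists>b\<in>{q. sim q a}. right_dvd (qX - qC b) ((qX - qC a) * P_seq L)"
        proof (rule swap_all)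
          show "a \<in> {q. sim q a}" by (simp add: sim_refl)
          show "\<forall>x\<in>set L. \<forall>t\<in>{q. sim q a}. \<exists>t'\<in>{q. sim q a}. (t + x - t') * t' = t * x"
          proof (intro ballI)
            fix x t assume x: "x \<in> set L" and t: "t \<in> {q. sim q a}"
            have "\<not> sim t x"
            proof
              assume "sim t x"
              moreover have "sim t a" using t by simp
              moreover have "sim x s" using simL x by blast
              ultimately have "sim a s" using sim_trans sim_sym by blast
              then show False using False by simp
            qed
            then obtain t' where t'1: "sim t' t" and t'2: "(t + x - t') * t' = t * x" using swap_exists by blast
            have "sim t a" using t by simp
            then have "t' \<in> {q. sim q a}" using t'1 sim_trans[of t' t a] by simp
            then show "\<exists>t'\<in>{q. sim q a}. (t + x - t') * t' = t * x"
              using t'2 by blast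
          qed
        qed
        then obtain b where "sim b a" "b = s" using roots PL by auto
        then show ?thesis using False sim_sym[of s a] by simp
      next
        case True
        have anr: "a \<notin> quat_reals" using sim_nonreal[OF True snr] .
        have lastin: "last L \<in> set L" using Lne by simp
        have "sim (last L) s" using simL lastin by blast
        then have sl: "sim a (last L)" using True sim_trans[of a s "last L"] sim_sym[of "last L" s] by simp
        show ?thesis
        proof (cases "qcnj a = last L")
          case False
          have lastn: "last L = L ! (length L - 1)" using Lne by (simp add: last_conv_nth)
          have "CH (L @ [a])"
            unfolding CH_def
          proof (rule conjI)
            show "\<forall>i<length (L @ [a]). (L @ [a]) ! i \<notin> quat_reals"
            proof (intro allI impI)
            fix i assume "i < length (L @ [a])"
            then show "(L @ [a]) ! i \<notin> quat_reals"
              using ch anr by (auto simp: CH_def nth_append less_Suc_eq)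
            qed
          next
            show "\<forall>i. i + 1 < length (L @ [a]) \<longrightarrow> qRe ((L @ [a]) ! (i + 1)) = qRe ((L @ [a]) ! i) \<and>
               qnorm ((L @ [a]) ! (i + 1)) = qnorm ((L @ [a]) ! i) \<and>
               qcnj ((L @ [a]) ! (i + 1)) \<noteq> (L @ [a]) ! i"
            proof (intro allI impI)
            fix i assume i: "i + 1 < length (L @ [a])"
            show "qRe ((L @ [a]) ! (i + 1)) = qRe ((L @ [a]) ! i) \<and>
               qnorm ((L @ [a]) ! (i + 1)) = qnorm ((L @ [a]) ! i) \<and>
               qcnj ((L @ [a]) ! (i + 1)) \<noteq> (L @ [a]) ! i"
            proof (cases "i + 1 < length L")
              case True
              then show ?thesis using ch by (simp add: CH_def nth_append)
            next
              case False
              then have "i = length L - 1" using i by simp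
              then show ?thesis using False sl \<open>qcnj a \<noteq> last L\<close> lastn Lne
                by (simp add: nth_append sim_def qnorm_eq)
            qed
            qed
          qed
          then show ?thesis by simp
        next
          case cl: True
          obtain L' l where Ll: "L = L' @ [l]" using Lne by (metis rev_exhaust)
          have ls: "sim l s" using simL Ll by simp
          have acl: "a = qcnj l" using cl Ll cnj_cnj by (metis last_snoc)
          have e1: "qcnj l + l = s + qcnj s" using ls by (simp add: sim_def qdefs)
          have e2: "qcnj l * l = s * qcnj s" using ls by (simp add: sim_def cnj_mult_self mult_cnj_self)
          have sum_r: "s + qcnj s = quat_of_real (2 * qRe s)" by (simp add: qdefs)
          have N: "(qX - qC (qcnj l)) * (qX - qC l) = (qX - qC s) * (qX - qC (qcnj s))"
            by (rule quad_eq[OF e1 e2])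
          have Nexp: "(qX - qC s) * (qX - qC (qcnj s)) =
              qX * qX - qC (quat_of_real (2 * qRe s)) * qX + qC (quat_of_real (nsq s))"
            by (simp add: quad_expand sum_r mult_cnj_self)
          have "P_seq (L @ [a]) = (qX - qC (qcnj l)) * (qX - qC l) * P_seq L'"
            using PL P_seq_snoc[of L' l] Ll acl by (simp add: mult.assoc)
          also have "\<dots> = P_seq L' * ((qX - qC s) * (qX - qC (qcnj s)))"
            by (simp only: N Nexp N_central)
          also have "\<dots> = (P_seq L' * (qX - qC s)) * (qX - qC (qcnj s))"
            by (simp add: mult.assoc)
          finally have "right_dvd (qX - qC (qcnj s)) (P_seq (L @ [a]))"
            unfolding right_dvd_def by blast
          then have "qcnj s = s" by (rule roots)
          then show ?thesis using cnj_neq[OF snr] by simp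
        qed
      qed
    qed
  qed
qed

theorem mainTheorem17:
  shows "(\<forall>as :: quat list. as \<noteq> [] \<longrightarrow>
           (multiplicity_seq as \<longleftrightarrow>
              ((\<forall>i < length as. as ! i = as ! 0) \<and> as ! 0 \<in> quat_reals)
            \<or> ((\<forall>i < length as. as ! i \<notin> quat_reals) \<and>
               (\<forall>i. i + 1 < length as \<longrightarrow>
                    qRe (as ! (i + 1)) = qRe (as ! i) \<and>
                    qnorm (as ! (i + 1)) = qnorm (as ! i) \<and>
                    qcnj (as ! (i + 1)) \<noteq> as ! i))))
       \<and> (\<forall>(a :: quat) (r :: nat). r \<ge> 1 \<longrightarrow> multiplicity_seq (replicate r a))"
proof -
  have 1: "\<forall>as :: quat list. as \<noteq> [] \<longrightarrow> (multiplicity_seq as \<longleftrightarrow> RC as \<or> CH as)"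
    using if_dir only_if_dir by blast
  have 2: "\<forall>(a :: quat) (r :: nat). r \<ge> 1 \<longrightarrow> multiplicity_seq (replicate r a)"
  proof (intro allI impI)
    fix a :: quat and r :: nat assume r: "r \<ge> 1"
    have "RC (replicate r a) \<or> CH (replicate r a)"
    proof (cases "a \<in> quat_reals")
      case True then show ?thesis using r by (simp add: RC_def)
    next
      case False then show ?thesis using r cnj_neq[OF False] by (simp add: CH_def)
    qed
    then show "multiplicity_seq (replicate r a)" using r if_dir by (cases r) auto
  qed
  show ?thesis using 1 2 unfolding RC_def CH_def by blast
qed

end
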